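(* For $1\le i\le n$ and $1\le j\le n-1$ we have $g_jt_i=t_{s_j(i)}g_j$. Consequently $g_jf=(s_j.f)g_j$ for every $f\in R[t_1,\ldots,t_n]$ and $1\le j\le n-1$.
   Context: Standing setup: $R$ is an integral domain, $n\ge 2$, $r\ge 1$, and $q,u_1,\ldots,u_r\in R$ with $q$ invertible in $R$ and $\Delta:=\prod_{1\le j<i\le r}(u_i-u_j)$ invertible in $R$. For $1\le c\le r$ let $F_c(X)\in R[X]$ be the unique polynomial of degree $\le r-1$ with $F_c(u_{c'})=\delta_{c,c'}\Delta$ for all $1\le c'\le r$. The modified Ariki–Koike (Shoji) algebra $\mathcal H_{n,r}=\mathcal H_{n,r}(R,q,u_1,\ldots,u_r)$ is the associative $R$-algebra generated by $t_1,\ldots,t_n,T_1,\ldots,T_{n-1}$ subject to: $(T_i-q)(T_i+q^{-1})=0$; $(t_i-u_1)\cdots(t_i-u_r)=0$; $T_iT_{i+1}T_i=T_{i+1}T_iT_{i+1}$; $T_iT_j=T_jT_i$ for $|i-j|\ge2$; $t_it_j=t_jt_i$; $T_jt_k=t_kT_j$ for $k\ne j,j+1$; and for $2\le j\le n$: $T_{j-1}t_j=t_{j-1}T_{j-1}+\Delta^{-2}\sum_{1\le c_1<c_2\le r}(u_{c_2}-u_{c_1})(q-q^{-1})F_{c_1}(t_{j-1})F_{c_2}(t_j)$ and $T_{j-1}t_{j-1}=t_jT_{j-1}-\Delta^{-2}\sum_{1\le c_1<c_2\le r}(u_{c_2}-u_{c_1})(q-q^{-1})F_{c_1}(t_{j-1})F_{c_2}(t_j)$.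 Write $[1,r]=\{1,\ldots,r\}$; for $\mathbf k=(k_1,\ldots,k_n)\in[1,r]^n$ set $b_{\mathbf k}:=\prod_{i=1}^n\prod_{1\le j\le r,\,j\ne k_i}\frac{t_i-u_j}{u_{k_i}-u_j}$. For $1\le i,j\le n$ let $B'_{i,j}:=-(q-q^{-1})\sum_{\mathbf k\in[1,r]^n,\ k_i<k_j}b_{\mathbf k}$, and for $1\le i\le n-1$ let $g_i:=T_i+B'_{i,i+1}$. $\mathfrak S(n)$ acts on $R[t_1,\ldots,t_n]$ by $R$-algebra automorphisms via $w.t_i=t_{w(i)}$; $s_j=(j\ j+1)$. *)

theory Defs
  imports "HOL-Computational_Algebra.Polynomial" "HOL-Library.FuncSet" "HOL-Library.Poly_Mapping"
begin

definition rinv :: "'r::comm_ring_1 \<Rightarrow> 'r" where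
  "rinv x = (THE y. x * y = 1)"

definition Delta :: "nat \<Rightarrow> (nat \<Rightarrow> 'r::comm_ring_1) \<Rightarrow> 'r" where
  "Delta r u = (\<Prod>(i,j)\<in>{(i,j). 1 \<le> j \<and> j < i \<and> i \<le> r}. u i - u j)"

definition Fpoly :: "nat \<Rightarrow> (nat \<Rightarrow> 'r::comm_ring_1) \<Rightarrow> nat \<Rightarrow> 'r poly" where
  "Fpoly r u c = (THE p. degree p \<le> r - 1 \<and>
      (\<forall>c'\<in>{1..r}. poly p (u c') = (if c' = c then Delta r u else 0)))"

(* R-algebra structure map: ring homomorphism with central image *)
definition is_alg_map :: "('r::comm_ring_1 \<Rightarrow> 'a::ring_1) \<Rightarrow> bool" where
  "is_alg_map \<phi> \<longleftrightarrow> \<phi> 1 = 1 \<and> (\<forall>x y. \<phi> (x + y) = \<phi> x + \<phi> y)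
     \<and> (\<forall>x y. \<phi> (x * y) = \<phi> x * \<phi> y) \<and> (\<forall>x a. \<phi> x * a = a * \<phi> x)"

definition peval :: "('r::comm_ring_1 \<Rightarrow> 'a::ring_1) \<Rightarrow> 'r poly \<Rightarrow> 'a \<Rightarrow> 'a" where
  "peval \<phi> p x = (\<Sum>k\<le>degree p. \<phi> (coeff p k) * x ^ k)"

definition shoji_corr :: "('r::comm_ring_1 \<Rightarrow> 'a::ring_1) \<Rightarrow> nat \<Rightarrow> 'r \<Rightarrow> (nat \<Rightarrow> 'r)
    \<Rightarrow> 'a \<Rightarrow> 'a \<Rightarrow> 'a" where
  "shoji_corr \<phi> r q u x y = \<phi> ((rinv (Delta r u))^2) *
     (\<Sum>(c1,c2)\<in>{(c1,c2). 1 \<le> c1 \<and> c1 < c2 \<and> c2 \<le> r}.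
        \<phi> ((u c2 - u c1) * (q - rinv q)) * peval \<phi> (Fpoly r u c1) x * peval \<phi> (Fpoly r u c2) y)"

(* t_1..t_n, T_1..T_{n-1} in an R-algebra (via \<phi>) satisfy the defining relations of H_{n,r} *)
definition shoji_rel :: "('r::comm_ring_1 \<Rightarrow> 'a::ring_1) \<Rightarrow> nat \<Rightarrow> nat \<Rightarrow> 'r \<Rightarrow> (nat \<Rightarrow> 'r)
    \<Rightarrow> (nat \<Rightarrow> 'a) \<Rightarrow> (nat \<Rightarrow> 'a) \<Rightarrow> bool" where
  "shoji_rel \<phi> n r q u t T \<longleftrightarrow>
     (\<forall>i\<in>{1..<n}. (T i - \<phi> q) * (T i + \<phi> (rinv q)) = 0)
   \<and> (\<forall>i\<in>{1..n}. prod_list (map (\<lambda>c. t i - \<phi> (u c)) [1..<r+1]) = 0)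
   \<and> (\<forall>i. 1 \<le> i \<and> i + 1 < n \<longrightarrow> T i * T (i+1) * T i = T (i+1) * T i * T (i+1))
   \<and> (\<forall>i\<in>{1..<n}. \<forall>j\<in>{1..<n}. (i + 2 \<le> j \<or> j + 2 \<le> i) \<longrightarrow> T i * T j = T j * T i)
   \<and> (\<forall>i\<in>{1..n}. \<forall>j\<in>{1..n}. t i * t j = t j * t i)
   \<and> (\<forall>j\<in>{1..<n}. \<forall>k\<in>{1..n}. k \<noteq> j \<and> k \<noteq> j + 1 \<longrightarrow> T j * t k = t k * T j)
   \<and> (\<forall>j\<in>{2..n}. T (j-1) * t j = t (j-1) * T (j-1) + shoji_corr \<phi> r q u (t (j-1)) (t j))
   \<and> (\<forall>j\<in>{2..n}. T (j-1) * t (j-1) = t j * T (j-1) - shoji_corr \<phi> r q u (t (j-1)) (t j))"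

definition bk :: "('r::comm_ring_1 \<Rightarrow> 'a::ring_1) \<Rightarrow> nat \<Rightarrow> nat \<Rightarrow> (nat \<Rightarrow> 'r) \<Rightarrow> (nat \<Rightarrow> 'a)
    \<Rightarrow> (nat \<Rightarrow> nat) \<Rightarrow> 'a" where
  "bk \<phi> n r u t k = prod_list (map (\<lambda>i. prod_list (map (\<lambda>j. (t i - \<phi> (u j)) * \<phi> (rinv (u (k i) - u j)))
       (filter (\<lambda>j. j \<noteq> k i) [1..<r+1]))) [1..<n+1])"

definition Bprime :: "('r::comm_ring_1 \<Rightarrow> 'a::ring_1) \<Rightarrow> nat \<Rightarrow> nat \<Rightarrow> 'r \<Rightarrow> (nat \<Rightarrow> 'r)
    \<Rightarrow> (nat \<Rightarrow> 'a) \<Rightarrow> nat \<Rightarrow> nat \<Rightarrow> 'a" where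
  "Bprime \<phi> n r q u t i j = - (\<phi> (q - rinv q) *
     (\<Sum>k\<in>{k\<in>PiE {1..n} (\<lambda>_. {1..r}). k i < k j}. bk \<phi> n r u t k))"

definition gen :: "('r::comm_ring_1 \<Rightarrow> 'a::ring_1) \<Rightarrow> nat \<Rightarrow> nat \<Rightarrow> 'r \<Rightarrow> (nat \<Rightarrow> 'r)
    \<Rightarrow> (nat \<Rightarrow> 'a) \<Rightarrow> (nat \<Rightarrow> 'a) \<Rightarrow> nat \<Rightarrow> 'a" where
  "gen \<phi> n r q u t T i = T i + Bprime \<phi> n r q u t i (i+1)"

definition sref :: "nat \<Rightarrow> nat \<Rightarrow> nat" where
  "sref j i = (if i = j then j + 1 else if i = j + 1 then j else i)"

(* evaluation of a polynomial f in R[X_1..X_n] (monomial \<Rightarrow> coefficient) at X_i := t_(\<sigma> i) *)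
definition mpeval :: "('r::comm_ring_1 \<Rightarrow> 'a::ring_1) \<Rightarrow> nat \<Rightarrow> (nat \<Rightarrow> 'a) \<Rightarrow> (nat \<Rightarrow> nat)
    \<Rightarrow> ((nat \<Rightarrow>\<^sub>0 nat) \<Rightarrow>\<^sub>0 'r) \<Rightarrow> 'a" where
  "mpeval \<phi> n t \<sigma> f = (\<Sum>mo\<in>Poly_Mapping.keys f. \<phi> (Poly_Mapping.lookup f mo) *
      prod_list (map (\<lambda>i. t (\<sigma> i) ^ Poly_Mapping.lookup (mo :: nat \<Rightarrow>\<^sub>0 nat) i) [1..<n+1]))"

end

theory Submission
  imports Defs
begin


lemma alg_1: "is_alg_map \<phi> \<Longrightarrow> \<phi> 1 = 1" unfolding is_alg_map_def by blast
lemma alg_add: "is_alg_map \<phi> \<Longrightarrow> \<phi> (x + y) = \<phi> x + \<phi> y" unfolding is_alg_map_def by blast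
lemma alg_mult: "is_alg_map \<phi> \<Longrightarrow> \<phi> (x * y) = \<phi> x * \<phi> y" unfolding is_alg_map_def by blast
lemma alg_central: "is_alg_map \<phi> \<Longrightarrow> \<phi> x * a = a * \<phi> x" unfolding is_alg_map_def by blast
lemma alg_0: "is_alg_map \<phi> \<Longrightarrow> \<phi> 0 = 0"
  using alg_add[of \<phi> 0 0] by simp
lemma alg_uminus: "is_alg_map \<phi> \<Longrightarrow> \<phi> (- x) = - \<phi> x"
  using alg_add[of \<phi> x "-x"] alg_0[of \<phi>] by (simp add: eq_neg_iff_add_eq_0 add.commute)
lemma alg_diff: "is_alg_map \<phi> \<Longrightarrow> \<phi> (x - y) = \<phi> x - \<phi> y"
  using alg_add[of \<phi> x "-y"] alg_uminus[of \<phi> y] by simp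
lemma alg_sum: "is_alg_map \<phi> \<Longrightarrow> \<phi> (sum f A) = (\<Sum>a\<in>A. \<phi> (f a))"
  by (induction A rule: infinite_finite_induct) (auto simp: alg_0 alg_add)
lemma alg_power: "is_alg_map \<phi> \<Longrightarrow> \<phi> (x ^ k) = \<phi> x ^ k"
  by (induction k) (auto simp: alg_1 alg_mult)

lemma peval_bound:
  assumes "is_alg_map \<phi>" "degree p \<le> N"
  shows "peval \<phi> p x = (\<Sum>k\<le>N. \<phi> (coeff p k) * x ^ k)"
proof -
  have "(\<Sum>k\<le>N. \<phi> (coeff p k) * x ^ k) = (\<Sum>k\<le>degree p. \<phi> (coeff p k) * x ^ k)"
    using assms by (intro sum.mono_neutral_right) (auto simp: coeff_eq_0 alg_0)
  thus ?thesis by (simp add: peval_def)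
qed

lemma peval_0: "is_alg_map \<phi> \<Longrightarrow> peval \<phi> 0 x = 0"
  by (simp add: peval_def alg_0)

lemma peval_pCons:
  assumes a: "is_alg_map \<phi>"
  shows "peval \<phi> (pCons c p) x = \<phi> c + x * peval \<phi> p x"
proof -
  have "peval \<phi> (pCons c p) x = (\<Sum>k\<le>Suc (degree p). \<phi> (coeff (pCons c p) k) * x ^ k)"
    using a by (intro peval_bound) (auto simp: degree_pCons_le)
  also have "\<dots> = \<phi> c + (\<Sum>k\<le>degree p. \<phi> (coeff p k) * x ^ Suc k)"
    by (subst sum.atMost_Suc_shift) simp
  also have "(\<Sum>k\<le>degree p. \<phi> (coeff p k) * x ^ Suc k) = (\<Sum>k\<le>degree p. x * (\<phi> (coeff p k) * x ^ k))"
  proof (intro sum.cong refl)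
    fix k
    have "\<phi> (coeff p k) * x ^ Suc k = (\<phi> (coeff p k) * x) * x ^ k" by (simp add: mult.assoc)
    also have "\<phi> (coeff p k) * x = x * \<phi> (coeff p k)" by (rule alg_central[OF a])
    finally show "\<phi> (coeff p k) * x ^ Suc k = x * (\<phi> (coeff p k) * x ^ k)" by (simp add: mult.assoc)
  qed
  also have "\<dots> = x * peval \<phi> p x" by (simp add: peval_def sum_distrib_left)
  finally show ?thesis .
qed

lemma peval_add:
  assumes a: "is_alg_map \<phi>"
  shows "peval \<phi> (p + q) x = peval \<phi> p x + peval \<phi> q x"
proof -
  let ?N = "max (degree p) (degree q)"
  have "peval \<phi> (p + q) x = (\<Sum>k\<le>?N. \<phi> (coeff (p+q) k) * x ^ k)"
    using a by (intro peval_bound) (auto simp: degree_add_le)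
  also have "\<dots> = (\<Sum>k\<le>?N. \<phi> (coeff p k) * x ^ k) + (\<Sum>k\<le>?N. \<phi> (coeff q k) * x ^ k)"
    by (simp add: alg_add[OF a] distrib_right sum.distrib)
  also have "\<dots> = peval \<phi> p x + peval \<phi> q x"
    using peval_bound[OF a, of p ?N] peval_bound[OF a, of q ?N] by simp
  finally show ?thesis .
qed

lemma peval_smult:
  assumes a: "is_alg_map \<phi>"
  shows "peval \<phi> (smult c p) x = \<phi> c * peval \<phi> p x"
proof -
  have "peval \<phi> (smult c p) x = (\<Sum>k\<le>degree p. \<phi> (coeff (smult c p) k) * x ^ k)"
    using a by (intro peval_bound) (auto simp: degree_smult_le)
  also have "\<dots> = \<phi> c * peval \<phi> p x"
    by (simp add: peval_def sum_distrib_left alg_mult[OF a] mult.assoc)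
  finally show ?thesis .
qed

lemma peval_mult:
  assumes a: "is_alg_map \<phi>"
  shows "peval \<phi> (p * q) x = peval \<phi> p x * peval \<phi> q x"
proof (induction p)
  case (pCons c p)
  have "peval \<phi> (pCons c p * q) x = \<phi> c * peval \<phi> q x + x * (peval \<phi> p x * peval \<phi> q x)"
    using pCons by (simp add: peval_add[OF a] peval_smult[OF a] peval_pCons[OF a] alg_0[OF a])
  also have "\<dots> = peval \<phi> (pCons c p) x * peval \<phi> q x"
    by (simp add: peval_pCons[OF a] distrib_right mult.assoc)
  finally show ?case .
qed (simp add: peval_0[OF a])

lemma peval_const: "is_alg_map \<phi> \<Longrightarrow> peval \<phi> [:c:] x = \<phi> c"
  by (simp add: peval_pCons peval_0)
lemma peval_1: "is_alg_map \<phi> \<Longrightarrow> peval \<phi> 1 x = 1"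
  using peval_const[of \<phi> 1 x] by (simp add: alg_1 one_pCons)
lemma peval_lin: "is_alg_map \<phi> \<Longrightarrow> peval \<phi> [:c, 1:] x = \<phi> c + x"
  by (simp add: peval_pCons peval_0 alg_1)

lemma peval_sum: "is_alg_map \<phi> \<Longrightarrow> peval \<phi> (sum f A) x = (\<Sum>a\<in>A. peval \<phi> (f a) x)"
  by (induction A rule: infinite_finite_induct) (auto simp: peval_0 peval_add)

lemma peval_prod_list: "is_alg_map \<phi> \<Longrightarrow> peval \<phi> (prod_list (map f xs)) x = prod_list (map (\<lambda>a. peval \<phi> (f a) x) xs)"
  by (induction xs) (auto simp: peval_1 peval_mult)

lemma peval_comm:
  assumes a: "is_alg_map \<phi>" and c: "y * x = x * y"
  shows "y * peval \<phi> p x = peval \<phi> p x * y"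
proof -
  have px: "y * x ^ k = x ^ k * y" for k
    proof (induction k)
    case (Suc k)
    have "y * x ^ Suc k = (y * x) * x ^ k" by (simp add: mult.assoc)
    also have "\<dots> = x * (y * x ^ k)" by (simp add: c mult.assoc)
    also have "\<dots> = x ^ Suc k * y" by (simp add: Suc mult.assoc)
    finally show ?case .
  qed simp
  show ?thesis unfolding peval_def sum_distrib_left sum_distrib_right
  proof (intro sum.cong refl)
    fix k
    have "y * (\<phi> (coeff p k) * x ^ k) = (y * \<phi> (coeff p k)) * x ^ k" by (simp add: mult.assoc)
    also have "y * \<phi> (coeff p k) = \<phi> (coeff p k) * y" by (rule alg_central[OF a, symmetric])
    also have "(\<phi> (coeff p k) * y) * x ^ k = \<phi> (coeff p k) * (x ^ k * y)" by (simp add: mult.assoc px)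
    finally show "y * (\<phi> (coeff p k) * x ^ k) = \<phi> (coeff p k) * x ^ k * y" by (simp add: mult.assoc)
  qed
qed


lemma rinv_unit:
  fixes x :: "'r::comm_ring_1"
  assumes "x dvd 1" shows "x * rinv x = 1"
proof -
  obtain y where y: "1 = x * y" using assms by (auto simp: dvd_def)
  have "x * (THE y. x * y = 1) = 1"
  proof (rule theI[of "\<lambda>y. x * y = 1" y])
    show "x * y = 1" using y by simp
    fix z assume "x * z = 1"
    then have "y * (x * z) = y" by simp
    then show "z = y" using y by (simp add: mult.assoc[symmetric] mult.commute)
  qed
  thus ?thesis by (simp add: rinv_def)
qed

lemma Delta_units:
  fixes u :: "nat \<Rightarrow> 'r::comm_ring_1"
  assumes D: "Delta r u dvd 1" and i: "i \<in> {1..r}" and j: "j \<in> {1..r}" and ij: "i \<noteq> j"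
  shows "(u i - u j) dvd 1"
proof -
  have fin: "finite {(i,j). 1 \<le> j \<and> j < i \<and> i \<le> (r::nat)}"
    by (rule finite_subset[of _ "{1..r} \<times> {1..r}"]) auto
  have gen: "(u a - u b) dvd 1" if "1 \<le> b" "b < a" "a \<le> r" for a b
  proof -
    have "(u a - u b) dvd Delta r u"
      unfolding Delta_def using that
      using dvd_prodI[OF fin, of "(a,b)" "\<lambda>(i,j). u i - u j"] by auto
    thus ?thesis using D dvd_trans by blast
  qed
  show ?thesis
  proof (cases "j < i")
    case True thus ?thesis using gen i j by auto
  next
    case False
    then have "(u j - u i) dvd 1" using gen i j ij by auto
    moreover have "u i - u j = - (u j - u i)" by simp
    ultimately show ?thesis by (metis minus_dvd_iff)
  qed
qed

definition lin :: "(nat \<Rightarrow> 'r::comm_ring_1) \<Rightarrow> nat \<Rightarrow> 'r poly" where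
  "lin u j = [:- u j, 1:]"

definition Lp :: "nat \<Rightarrow> (nat \<Rightarrow> 'r::comm_ring_1) \<Rightarrow> nat \<Rightarrow> 'r poly" where
  "Lp r u c = prod_list (map (\<lambda>j. smult (rinv (u c - u j)) (lin u j)) (filter (\<lambda>j. j \<noteq> c) [1..<r+1]))"

lemma Lp_set: "Lp r u c = (\<Prod>j\<in>{1..r}-{c}. smult (rinv (u c - u j)) (lin u j))"
proof -
  have "set (filter (\<lambda>j. j \<noteq> c) [1..<r+1]) = {1..r}-{c}" by auto
  thus ?thesis unfolding Lp_def
    by (metis (no_types, lifting) distinct_filter distinct_upt prod.distinct_set_conv_list)
qed

locale lag =
  fixes r :: nat and u :: "nat \<Rightarrow> 'r::idom"
  assumes U: "\<And>i j. i \<in> {1..r} \<Longrightarrow> j \<in> {1..r} \<Longrightarrow> i \<noteq> j \<Longrightarrow> (u i - u j) dvd 1"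
    and r1: "r \<ge> 1"
begin

lemma inj: "inj_on u {1..r}"
proof (rule inj_onI, rule ccontr)
  fix i j assume "i \<in> {1..r}" "j \<in> {1..r}" "u i = u j" "i \<noteq> j"
  then have "(0::'r) dvd 1" using U[of i j] by simp
  thus False by simp
qed

lemma poly_Lp:
  assumes c: "c \<in> {1..r}" and c': "c' \<in> {1..r}"
  shows "poly (Lp r u c) (u c') = (if c' = c then 1 else 0)"
proof (cases "c' = c")
  case True
  have "poly (Lp r u c) (u c') = (\<Prod>j\<in>{1..r}-{c}. rinv (u c - u j) * (u c - u j))"
    using True by (simp add: Lp_set poly_prod lin_def algebra_simps)
  also have "\<dots> = 1"
    using U c by (intro prod.neutral) (auto simp: rinv_unit mult.commute)
  finally show ?thesis using True by simp
next
  case False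
  have "poly (Lp r u c) (u c') = (\<Prod>j\<in>{1..r}-{c}. rinv (u c - u j) * (u c' - u j))"
    by (simp add: Lp_set poly_prod lin_def algebra_simps)
  also have "\<dots> = 0"
    using False c' by (intro prod_zero) auto
  finally show ?thesis using False by simp
qed

lemma degree_Lp:
  assumes c: "c \<in> {1..r}"
  shows "degree (Lp r u c) \<le> r - 1"
proof -
  have "degree (Lp r u c) \<le> (\<Sum>j\<in>{1..r}-{c}. degree (smult (rinv (u c - u j)) (lin u j)))"
    unfolding Lp_set using degree_prod_sum_le[of "{1..r}-{c}" "\<lambda>j. smult (rinv (u c - u j)) (lin u j)"] by (simp add: o_def del: degree_smult_eq)
  also have "\<dots> \<le> (\<Sum>j\<in>{1..r}-{c}. 1)"
    by (intro sum_mono) (auto simp: lin_def intro: order.trans[OF degree_smult_le])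
  also have "\<dots> = r - 1" using c by simp
  finally show ?thesis .
qed

lemma uniq:
  assumes "degree p \<le> r - 1" "degree q \<le> r - 1"
    and "\<And>c. c \<in> {1..r} \<Longrightarrow> poly p (u c) = poly q (u c)"
  shows "p = q"
proof (rule poly_eqI_degree[of "u ` {1..r}"])
  have "card (u ` {1..r}) = r" using inj by (simp add: card_image)
  thus "card (u ` {1..r}) > degree p" "card (u ` {1..r}) > degree q"
    using assms r1 by linarith+
qed (use assms in auto)

lemma Fpoly_eq:
  assumes c: "c \<in> {1..r}"
  shows "Fpoly r u c = smult (Delta r u) (Lp r u c)"
  unfolding Fpoly_def
proof (rule the_equality)
  show "degree (smult (Delta r u) (Lp r u c)) \<le> r - 1 \<and>
    (\<forall>c'\<in>{1..r}. poly (smult (Delta r u) (Lp r u c)) (u c') = (if c' = c then Delta r u else 0))"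
    using degree_Lp[OF c] poly_Lp[OF c] degree_smult_le order.trans by fastforce
  fix p assume p: "degree p \<le> r - 1 \<and>
    (\<forall>c'\<in>{1..r}. poly p (u c') = (if c' = c then Delta r u else 0))"
  show "p = smult (Delta r u) (Lp r u c)"
    using p degree_Lp[OF c] poly_Lp[OF c] degree_smult_le order.trans
    by (intro uniq) fastforce+
qed

lemma sum_Lp: "(\<Sum>c\<in>{1..r}. Lp r u c) = 1"
proof (rule uniq)
  show "degree (\<Sum>c\<in>{1..r}. Lp r u c) \<le> r - 1"
    by (intro degree_sum_le degree_Lp) auto
  show "degree (1::'r poly) \<le> r - 1" by simp
  fix c' assume c': "c' \<in> {1..r}"
  have "poly (\<Sum>c\<in>{1..r}. Lp r u c) (u c') = (\<Sum>c\<in>{1..r}. if c' = c then 1 else 0)"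
    using c' by (simp add: poly_sum poly_Lp)
  also have "\<dots> = 1" using c' by simp
  finally show "poly (\<Sum>c\<in>{1..r}. Lp r u c) (u c') = poly 1 (u c')" by simp
qed

lemma lin_Lp:
  assumes c: "c \<in> {1..r}"
  shows "lin u c * Lp r u c = smult (\<Prod>j\<in>{1..r}-{c}. rinv (u c - u j)) (\<Prod>j\<in>{1..r}. lin u j)"
proof -
  have "(\<Prod>j\<in>{1..r}. lin u j) = lin u c * (\<Prod>j\<in>{1..r}-{c}. lin u j)"
    using c by (simp add: prod.remove)
  thus ?thesis by (simp add: Lp_set prod_smult)
qed

end


lemma prod_list_ones: "(\<And>x. x \<in> set xs \<Longrightarrow> f x = (1::'a::monoid_mult)) \<Longrightarrow> prod_list (map f xs) = 1"
  by (induction xs) auto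

lemma prod_list_comm:
  fixes x :: "'a::monoid_mult"
  shows "(\<And>y. y \<in> set xs \<Longrightarrow> x * f y = f y * x) \<Longrightarrow> x * prod_list (map f xs) = prod_list (map f xs) * x"
proof (induction xs)
  case (Cons a xs)
  have "x * prod_list (map f (a # xs)) = (x * f a) * prod_list (map f xs)" by (simp add: mult.assoc)
  also have "\<dots> = f a * (x * prod_list (map f xs))" using Cons.prems by (simp add: mult.assoc)
  also have "\<dots> = prod_list (map f (a # xs)) * x" using Cons by (simp add: mult.assoc)
  finally show ?case .
qed simp

lemma prod_list_eig:
  fixes x a :: "'a::monoid_mult"
  assumes "\<And>y. y \<in> set xs \<Longrightarrow> f y * x = x * f y" and "i0 \<in> set xs"
    and "f i0 * x = a * f i0" and "\<And>z. a * z = z * a"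
  shows "prod_list (map f xs) * x = a * prod_list (map f xs)"
  using assms
proof (induction xs)
  case (Cons b xs)
  show ?case
  proof (cases "i0 \<in> set xs")
    case True
    have "prod_list (map f (b # xs)) * x = f b * (prod_list (map f xs) * x)" by (simp add: mult.assoc)
    also have "\<dots> = f b * (a * prod_list (map f xs))" using Cons True by simp
    also have "\<dots> = a * prod_list (map f (b # xs))" using Cons.prems(4)
      by (metis list.simps(9) mult.assoc prod_list.Cons)
    finally show ?thesis .
  next
    case False
    then have "b = i0" using Cons.prems by simp
    have "prod_list (map f (b # xs)) * x = f b * (prod_list (map f xs) * x)" by (simp add: mult.assoc)
    also have "\<dots> = f b * (x * prod_list (map f xs))"
      using Cons.prems(1) prod_list_comm[of xs x f] by (metis list.set_intros(2))
    also have "\<dots> = a * prod_list (map f (b # xs))" using Cons.prems(3) \<open>b = i0\<close>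
      by (simp add: mult.assoc[symmetric])
    finally show ?thesis .
  qed
qed simp

lemma prod_list_sum_PiE:
  fixes f :: "'i \<Rightarrow> 'b \<Rightarrow> 'c :: semiring_1"
  assumes "distinct xs" and "\<And>x. x \<in> set xs \<Longrightarrow> finite (B x)"
  shows "prod_list (map (\<lambda>x. \<Sum>y\<in>B x. f x y) xs) = (\<Sum>g\<in>PiE (set xs) B. prod_list (map (\<lambda>x. f x (g x)) xs))"
  using assms
proof (induction xs)
  case Nil
  thus ?case by simp
next
  case (Cons x xs)
  let ?A = "set xs"
  have "(\<Sum>g\<in>Pi\<^sub>E (insert x ?A) B. prod_list (map (\<lambda>x'. f x' (g x')) (x # xs))) =
          (\<Sum>g\<in>Pi\<^sub>E (insert x ?A) B. f x (g x) * prod_list (map (\<lambda>x'. f x' (g x')) xs))"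
    by simp
  also have "(\<lambda>g. prod_list (map (\<lambda>x'. f x' (g x')) xs)) = (\<lambda>g. prod_list (map (\<lambda>x'. f x' (if x' = x then undefined else g x')) xs))"
    using Cons.prems by (intro ext arg_cong[where f=prod_list] map_cong) auto
  also have "(\<Sum>g\<in>Pi\<^sub>E (insert x ?A) B. f x (g x) * \<dots> g) =
               (\<Sum>(y,g)\<in>B x \<times> Pi\<^sub>E ?A B. f x y * prod_list (map (\<lambda>x'. f x' (g x')) xs))"
    using Cons.prems
    by (intro sum.reindex_bij_witness[of _ "\<lambda>(y,g). g(x := y)" "\<lambda>g. (g x, g(x := undefined))"])
       (auto simp: PiE_def extensional_def intro!: arg_cong[where f=prod_list] map_cong)
  also have "\<dots> = (\<Sum>y\<in>B x. \<Sum>g\<in>Pi\<^sub>E ?A B. f x y * prod_list (map (\<lambda>x'. f x' (g x')) xs))"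
    by (subst sum.cartesian_product) auto
  also have "\<dots> = (\<Sum>y\<in>B x. f x y) * (\<Sum>g\<in>Pi\<^sub>E ?A B. prod_list (map (\<lambda>x'. f x' (g x')) xs))"
    by (simp add: sum_distrib_left sum_distrib_right sum.swap[of _ "B x"])
  also have "(\<Sum>g\<in>Pi\<^sub>E ?A B. prod_list (map (\<lambda>x'. f x' (g x')) xs)) = prod_list (map (\<lambda>x. \<Sum>y\<in>B x. f x y) xs)"
    using Cons.prems by (intro Cons.IH [symmetric]) auto
  finally show ?case by simp
qed


locale sh =
  fixes \<phi> :: "'r::idom \<Rightarrow> 'a::ring_1" and n r :: nat and q :: 'r and u :: "nat \<Rightarrow> 'r"
    and t T :: "nat \<Rightarrow> 'a"
  assumes n2: "n \<ge> 2" and r1: "r \<ge> 1" and qu: "q dvd 1" and Du: "Delta r u dvd 1"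
    and alg: "is_alg_map \<phi>" and rel: "shoji_rel \<phi> n r q u t T"
begin

sublocale lag r u
  by unfold_locales (use Delta_units[OF Du] r1 in auto)

definition e :: "nat \<Rightarrow> nat \<Rightarrow> 'a" where "e i c = peval \<phi> (Lp r u c) (t i)"

lemma peval_lin':
  "peval \<phi> (lin u j) x = x - \<phi> (u j)"
  unfolding lin_def using peval_lin[OF alg, of "- u j" x] alg_uminus[OF alg, of "u j"] by simp

lemma peval_slin:
  "peval \<phi> (smult a (lin u j)) x = (x - \<phi> (u j)) * \<phi> a"
  using peval_smult[OF alg, of a "lin u j" x] peval_lin'[of j x] alg_central[OF alg, of a "x - \<phi> (u j)"] by simp

lemma central: "\<phi> x * a = a * \<phi> x" using alg by (simp add: alg_central)

lemma tt: "i \<in> {1..n} \<Longrightarrow> i' \<in> {1..n} \<Longrightarrow> t i * t i' = t i' * t i"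
  using rel by (simp add: shoji_rel_def)

lemma te: "i \<in> {1..n} \<Longrightarrow> i' \<in> {1..n} \<Longrightarrow> t i' * e i c = e i c * t i'"
  unfolding e_def by (rule peval_comm[OF alg]) (simp add: tt)

lemma ee: "i \<in> {1..n} \<Longrightarrow> i' \<in> {1..n} \<Longrightarrow> e i' c' * e i c = e i c * e i' c'"
  unfolding e_def[of i] by (rule peval_comm[OF alg]) (simp add: te[symmetric])

lemma e_eig:
  assumes i: "i \<in> {1..n}" and c: "c \<in> {1..r}"
  shows "t i * e i c = \<phi> (u c) * e i c"
proof -
  have "peval \<phi> (lin u c * Lp r u c) (t i) = (t i - \<phi> (u c)) * e i c"
    by (simp only: peval_mult[OF alg] peval_lin' e_def)
  also have "peval \<phi> (lin u c * Lp r u c) (t i) = 0"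
  proof -
    have "(\<Prod>j\<in>{1..r}. lin u j) = prod_list (map (lin u) [1..<r+1])"
      by (metis atLeastLessThanSuc_atLeastAtMost Suc_eq_plus1 distinct_upt prod.distinct_set_conv_list set_upt)
    moreover have "peval \<phi> (prod_list (map (lin u) [1..<r+1])) (t i) = prod_list (map (\<lambda>c. t i - \<phi> (u c)) [1..<r+1])"
      by (simp only: peval_prod_list[OF alg] peval_lin')
    moreover have "prod_list (map (\<lambda>c. t i - \<phi> (u c)) [1..<r+1]) = 0"
      using rel i by (simp add: shoji_rel_def)
    ultimately show ?thesis
      by (simp add: lin_Lp[OF c] peval_smult[OF alg])
  qed
  finally show ?thesis by (simp add: algebra_simps)
qed

lemma e_sum: "(\<Sum>c\<in>{1..r}. e i c) = 1"
  using peval_sum[OF alg, of "Lp r u" "{1..r}" "t i"] sum_Lp by (simp add: e_def peval_1[OF alg])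

lemma Fpoly_e: "c \<in> {1..r} \<Longrightarrow> peval \<phi> (Fpoly r u c) (t i) = \<phi> (Delta r u) * e i c"
  by (simp add: Fpoly_eq peval_smult[OF alg] e_def)

lemma bk_e: "bk \<phi> n r u t k = prod_list (map (\<lambda>i. e i (k i)) [1..<n+1])"
  unfolding bk_def e_def Lp_def
  by (intro arg_cong[where f=prod_list] map_cong refl)
     (simp only: peval_prod_list[OF alg] peval_slin)

end


context sh begin

definition K :: "(nat \<Rightarrow> nat) set" where "K = PiE {1..n} (\<lambda>_. {1..r})"
definition S :: "nat \<Rightarrow> (nat \<Rightarrow> nat) set" where "S j = {k\<in>K. k j < k (j+1)}"
definition Q :: 'a where "Q = \<phi> (q - rinv q)"
definition W :: "nat \<Rightarrow> 'a" where
  "W j = Q * (\<Sum>k\<in>S j. \<phi> (u (k (j+1)) - u (k j)) * bk \<phi> n r u t k)"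

lemma finK: "finite K" unfolding K_def by (simp add: finite_PiE)
lemma finS: "finite (S j)" unfolding S_def using finK by simp

lemma bk_t:
  assumes k: "k \<in> K" and i: "i \<in> {1..n}"
  shows "bk \<phi> n r u t k * t i = \<phi> (u (k i)) * bk \<phi> n r u t k"
  unfolding bk_e
proof (rule prod_list_eig)
  show "e y (k y) * t i = t i * e y (k y)" if "y \<in> set [1..<n+1]" for y
    using te[of y i] that i by auto
  show "i \<in> set [1..<n+1]" using i by auto
  have "k i \<in> {1..r}" using k i by (auto simp: K_def PiE_def Pi_def)
  then show "e i (k i) * t i = \<phi> (u (k i)) * e i (k i)"
    using te[of i i] e_eig[of i "k i"] i by auto
qed (rule central)

lemma t_bk:
  assumes i: "i \<in> {1..n}"
  shows "t i * bk \<phi> n r u t k = bk \<phi> n r u t k * t i"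
  unfolding bk_e
  by (rule prod_list_comm) (use te[of _ i] i in auto)

lemma Bp: "Bprime \<phi> n r q u t j (j+1) = - (Q * (\<Sum>k\<in>S j. bk \<phi> n r u t k))"
  by (simp add: Bprime_def Q_def S_def K_def)

lemma Qc: "Q * z = z * Q" unfolding Q_def by (rule central)

lemma sum_bk_t:
  assumes i: "i \<in> {1..n}"
  shows "(\<Sum>k\<in>S j. bk \<phi> n r u t k) * t i = (\<Sum>k\<in>S j. \<phi> (u (k i)) * bk \<phi> n r u t k)"
  unfolding sum_distrib_right by (intro sum.cong refl bk_t i) (simp add: S_def)

lemma t_sum_bk:
  assumes i: "i \<in> {1..n}"
  shows "t i * (\<Sum>k\<in>S j. bk \<phi> n r u t k) = (\<Sum>k\<in>S j. bk \<phi> n r u t k) * t i"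
  unfolding sum_distrib_right sum_distrib_left by (intro sum.cong refl t_bk i)

lemma B_t:
  assumes i: "i \<in> {1..n}"
  shows "Bprime \<phi> n r q u t j (j+1) * t i = - (Q * (\<Sum>k\<in>S j. \<phi> (u (k i)) * bk \<phi> n r u t k))"
  unfolding Bp using sum_bk_t[OF i, of j] by (simp add: mult.assoc)

lemma t_B:
  assumes i: "i \<in> {1..n}"
  shows "t i * Bprime \<phi> n r q u t j (j+1) = - (Q * (\<Sum>k\<in>S j. \<phi> (u (k i)) * bk \<phi> n r u t k))"
proof -
  have "t i * (Q * (\<Sum>k\<in>S j. bk \<phi> n r u t k)) = (t i * Q) * (\<Sum>k\<in>S j. bk \<phi> n r u t k)"
    by (simp add: mult.assoc)
  also have "t i * Q = Q * t i" by (rule Qc[symmetric])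
  also have "(Q * t i) * (\<Sum>k\<in>S j. bk \<phi> n r u t k) = Q * ((\<Sum>k\<in>S j. bk \<phi> n r u t k) * t i)"
    by (simp add: mult.assoc t_sum_bk[OF i])
  finally show ?thesis unfolding Bp using sum_bk_t[OF i, of j] by simp
qed

lemma W_alt: "W j = Q * (\<Sum>k\<in>S j. \<phi> (u (k (j+1))) * bk \<phi> n r u t k) - Q * (\<Sum>k\<in>S j. \<phi> (u (k j)) * bk \<phi> n r u t k)"
  by (simp add: W_def alg_diff[OF alg] left_diff_distrib sum_subtractf right_diff_distrib)

lemma X1:
  assumes j: "j \<in> {1..<n}"
  shows "Bprime \<phi> n r q u t j (j+1) * t (j+1) - t j * Bprime \<phi> n r q u t j (j+1) = - W j"
proof -
  have j1: "j \<in> {1..n}" "j+1 \<in> {1..n}" using j by auto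
  show ?thesis using B_t[OF j1(2), of j] t_B[OF j1(1), of j] W_alt[of j] by simp
qed

lemma X2:
  assumes j: "j \<in> {1..<n}"
  shows "Bprime \<phi> n r q u t j (j+1) * t j - t (j+1) * Bprime \<phi> n r q u t j (j+1) = W j"
proof -
  have j1: "j \<in> {1..n}" "j+1 \<in> {1..n}" using j by auto
  show ?thesis using B_t[OF j1(1), of j] t_B[OF j1(2), of j] W_alt[of j] by simp
qed

end


context sh begin

lemma phi3: "\<phi> a * (\<phi> b * x) * (\<phi> c * y) = \<phi> (a * b * c) * (x * y)"
proof -
  have "x * (\<phi> c * y) = (x * \<phi> c) * y" by (simp add: mult.assoc)
  also have "x * \<phi> c = \<phi> c * x" by (rule central[symmetric])
  finally have 1: "x * (\<phi> c * y) = \<phi> c * x * y" .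
  have "\<phi> a * (\<phi> b * x) * (\<phi> c * y) = \<phi> a * \<phi> b * (x * (\<phi> c * y))" by (simp add: mult.assoc)
  also have "\<dots> = \<phi> a * \<phi> b * \<phi> c * (x * y)" unfolding 1 by (simp add: mult.assoc)
  finally show ?thesis by (simp add: alg_mult[OF alg])
qed

lemma upt_split:
  assumes j: "j \<in> {1..<n}"
  shows "[1..<n+1] = [1..<j] @ j # (j+1) # [j+2..<n+1]"
proof -
  have "[1..<n+1] = [1..<j] @ [j..<n+1]" using j upt_add_eq_append[of 1 j "n+1-j"] by auto
  moreover have "[j..<n+1] = j # (j+1) # [j+2..<n+1]" using j by (simp add: upt_conv_Cons)
  ultimately show ?thesis by simp
qed

lemma FACT:
  assumes j: "j \<in> {1..<n}" and c1: "c1 \<in> {1..r}" and c2: "c2 \<in> {1..r}"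
  shows "(\<Sum>k\<in>{k\<in>K. k j = c1 \<and> k (j+1) = c2}. bk \<phi> n r u t k) = e j c1 * e (j+1) c2"
proof -
  define B where "B = (\<lambda>i. if i = j then {c1} else if i = j+1 then {c2} else {1..r})"
  have PB: "PiE {1..n} B = {k\<in>K. k j = c1 \<and> k (j+1) = c2}"
  proof (intro set_eqI iffI)
    fix k assume k: "k \<in> PiE {1..n} B"
    have Bs: "B i \<subseteq> {1..r}" for i using c1 c2 by (simp add: B_def)
    have "\<forall>i\<in>{1..n}. k i \<in> B i" "k \<in> extensional {1..n}" using k by (simp_all add: PiE_iff)
    then have "k \<in> K" using Bs unfolding K_def PiE_iff by blast
    moreover have "k j \<in> B j" "k (j+1) \<in> B (j+1)" using \<open>\<forall>i\<in>{1..n}. k i \<in> B i\<close> j by auto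
    ultimately show "k \<in> {k\<in>K. k j = c1 \<and> k (j+1) = c2}" by (simp add: B_def)
  next
    fix k assume "k \<in> {k\<in>K. k j = c1 \<and> k (j+1) = c2}"
    then have k: "k \<in> K" "k j = c1" "k (j+1) = c2" by auto
    then have "\<forall>i\<in>{1..n}. k i \<in> {1..r}" "k \<in> extensional {1..n}" unfolding K_def PiE_iff by auto
    then show "k \<in> PiE {1..n} B" unfolding PiE_iff B_def using k(2,3) by auto
  qed
  have st: "set [1..<n+1] = {1..n}" by auto
  have "prod_list (map (\<lambda>i. \<Sum>c\<in>B i. e i c) [1..<n+1]) = (\<Sum>g\<in>PiE {1..n} B. prod_list (map (\<lambda>i. e i (g i)) [1..<n+1]))"
    using prod_list_sum_PiE[of "[1..<n+1]" B e] st by (simp add: B_def)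
  also have "\<dots> = (\<Sum>k\<in>{k\<in>K. k j = c1 \<and> k (j+1) = c2}. bk \<phi> n r u t k)"
    unfolding PB bk_e ..
  finally have 1: "(\<Sum>k\<in>{k\<in>K. k j = c1 \<and> k (j+1) = c2}. bk \<phi> n r u t k) = prod_list (map (\<lambda>i. \<Sum>c\<in>B i. e i c) [1..<n+1])" ..
  have 2: "(\<lambda>i. \<Sum>c\<in>B i. e i c) = (\<lambda>i. if i = j then e j c1 else if i = j+1 then e (j+1) c2 else 1)"
    using e_sum by (intro ext) (simp add: B_def)
  define f where "f = (\<lambda>i. if i = j then e j c1 else if i = j+1 then e (j+1) c2 else 1)"
  have o1: "prod_list (map f [1..<j]) = 1" by (rule prod_list_ones) (auto simp: f_def)
  have o2: "prod_list (map f [j+2..<n+1]) = 1" by (rule prod_list_ones) (auto simp: f_def)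
  have f1: "f j = e j c1" "f (j+1) = e (j+1) c2" by (auto simp: f_def)
  show ?thesis unfolding 1 2 upt_split[OF j] f_def[symmetric]
    by (simp only: map_append list.map prod_list.append prod_list.Cons o1 o2 f1 mult_1_left mult_1_right)
qed

end


context sh begin

lemma Y:
  assumes j: "j \<in> {1..<n}"
  shows "shoji_corr \<phi> r q u (t j) (t (j+1)) = W j"
proof -
  define P where "P = {(c1,c2). 1 \<le> c1 \<and> c1 < c2 \<and> c2 \<le> r}"
  define D where "D = Delta r u"
  define g where "g = (\<lambda>k::nat\<Rightarrow>nat. (k j, k (j+1)))"
  define h where "h = (\<lambda>k. \<phi> ((u (k (j+1)) - u (k j)) * (q - rinv q)) * bk \<phi> n r u t k)"
  have finP: "finite P" unfolding P_def by (rule finite_subset[of _ "{1..r} \<times> {1..r}"]) auto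
  have DD: "rinv D ^ 2 * s * D * D = s" for s
  proof -
    have "rinv D ^ 2 * s * D * D = s * ((D * rinv D) * (D * rinv D))" by (simp add: power2_eq_square ac_simps)
    thus ?thesis using rinv_unit[OF Du] unfolding D_def[symmetric] by simp
  qed
  have step1: "(case p of (c1,c2) \<Rightarrow> \<phi> ((u c2 - u c1) * (q - rinv q)) * peval \<phi> (Fpoly r u c1) (t j) * peval \<phi> (Fpoly r u c2) (t (j+1)))
      = \<phi> ((case p of (c1,c2) \<Rightarrow> (u c2 - u c1) * (q - rinv q)) * D * D) * (case p of (c1,c2) \<Rightarrow> e j c1 * e (j+1) c2)"
    if "p \<in> P" for p
  proof -
    obtain c1 c2 where p: "p = (c1,c2)" by (cases p)
    have c: "c1 \<in> {1..r}" "c2 \<in> {1..r}" using that p by (auto simp: P_def)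
    show ?thesis unfolding p using phi3 by (simp add: Fpoly_e[OF c(1)] Fpoly_e[OF c(2)] D_def)
  qed
  have "shoji_corr \<phi> r q u (t j) (t (j+1)) = \<phi> (rinv D ^ 2) * (\<Sum>p\<in>P. \<phi> ((case p of (c1,c2) \<Rightarrow> (u c2 - u c1) * (q - rinv q)) * D * D) * (case p of (c1,c2) \<Rightarrow> e j c1 * e (j+1) c2))"
    unfolding shoji_corr_def D_def[symmetric] P_def[symmetric] using step1 by (intro arg_cong2[where f="(*)"] refl sum.cong) auto
  also have "\<dots> = (\<Sum>p\<in>P. \<phi> (case p of (c1,c2) \<Rightarrow> (u c2 - u c1) * (q - rinv q)) * (case p of (c1,c2) \<Rightarrow> e j c1 * e (j+1) c2))"
    unfolding sum_distrib_left by (intro sum.cong refl) (simp add: mult.assoc[symmetric] alg_mult[OF alg, symmetric] DD)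
  also have "\<dots> = (\<Sum>p\<in>P. \<Sum>k\<in>{k\<in>S j. g k = p}. h k)"
  proof (intro sum.cong refl)
    fix p assume "p \<in> P"
    then obtain c1 c2 where p: "p = (c1,c2)" and c: "c1 \<in> {1..r}" "c2 \<in> {1..r}" "c1 < c2"
      by (auto simp: P_def)
    have "{k\<in>S j. g k = p} = {k\<in>K. k j = c1 \<and> k (j+1) = c2}"
      using c unfolding S_def g_def p by auto
    then have "(\<Sum>k\<in>{k\<in>S j. g k = p}. h k) = (\<Sum>k\<in>{k\<in>K. k j = c1 \<and> k (j+1) = c2}. \<phi> ((u c2 - u c1) * (q - rinv q)) * bk \<phi> n r u t k)"
      by (auto simp: h_def intro!: sum.cong)
    also have "\<dots> = \<phi> ((u c2 - u c1) * (q - rinv q)) * (e j c1 * e (j+1) c2)"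
      by (simp only: sum_distrib_left[symmetric] FACT[OF j c(1,2)])
    finally show "\<phi> (case p of (c1,c2) \<Rightarrow> (u c2 - u c1) * (q - rinv q)) * (case p of (c1,c2) \<Rightarrow> e j c1 * e (j+1) c2) = (\<Sum>k\<in>{k\<in>S j. g k = p}. h k)"
      by (simp add: p)
  qed
  also have "\<dots> = (\<Sum>k\<in>S j. h k)"
  proof (rule sum.group[OF finS finP])
    show "g ` S j \<subseteq> P"
    proof
      fix x assume "x \<in> g ` S j"
      then obtain k where k: "k \<in> S j" "x = g k" by auto
      then have "k \<in> K" "k j < k (j+1)" by (auto simp: S_def)
      moreover have "k j \<in> {1..r}" "k (j+1) \<in> {1..r}"
        using \<open>k \<in> K\<close> j unfolding K_def PiE_iff by auto
      ultimately show "x \<in> P" using k by (auto simp: P_def g_def)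
    qed
  qed
  also have "\<dots> = W j"
    unfolding W_def h_def Q_def sum_distrib_left
  proof (intro sum.cong refl)
    fix k
    have "\<phi> ((u (k (j+1)) - u (k j)) * (q - rinv q)) = \<phi> (q - rinv q) * \<phi> (u (k (j+1)) - u (k j))"
      by (simp add: alg_mult[OF alg, symmetric] mult.commute)
    then show "\<phi> ((u (k (j+1)) - u (k j)) * (q - rinv q)) * bk \<phi> n r u t k =
      \<phi> (q - rinv q) * (\<phi> (u (k (j+1)) - u (k j)) * bk \<phi> n r u t k)" by (simp add: mult.assoc)
  qed
  finally show ?thesis .
qed

end


context sh begin

lemma gen_t:
  assumes j: "j \<in> {1..<n}" and i: "i \<in> {1..n}"
  shows "gen \<phi> n r q u t T j * t i = t (sref j i) * gen \<phi> n r q u t T j"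
proof -
  define B where "B = Bprime \<phi> n r q u t j (j+1)"
  have j1: "j \<in> {1..n}" "j+1 \<in> {1..n}" "j+1 \<in> {2..n}" using j by auto
  have R1: "\<forall>j\<in>{2..n}. T (j-1) * t j = t (j-1) * T (j-1) + shoji_corr \<phi> r q u (t (j-1)) (t j)"
    using rel unfolding shoji_rel_def by (elim conjE) assumption
  have R2: "\<forall>j\<in>{2..n}. T (j-1) * t (j-1) = t j * T (j-1) - shoji_corr \<phi> r q u (t (j-1)) (t j)"
    using rel unfolding shoji_rel_def by (elim conjE) assumption
  have R3: "\<forall>j\<in>{1..<n}. \<forall>k\<in>{1..n}. k \<noteq> j \<and> k \<noteq> j + 1 \<longrightarrow> T j * t k = t k * T j"
    using rel unfolding shoji_rel_def by (elim conjE) assumption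
  have r1: "T j * t (j+1) = t j * T j + shoji_corr \<phi> r q u (t j) (t (j+1))"
    using bspec[OF R1 j1(3)] by simp
  have r2: "T j * t j = t (j+1) * T j - shoji_corr \<phi> r q u (t j) (t (j+1))"
    using bspec[OF R2 j1(3)] by simp
  have g: "gen \<phi> n r q u t T j = T j + B" by (simp add: gen_def B_def)
  consider "i = j" | "i = j+1" | "i \<noteq> j" "i \<noteq> j+1" by blast
  then show ?thesis
  proof cases
    case 1
    have "B * t j - t (j+1) * B = W j" using X2[OF j] by (simp add: B_def)
    then have "B * t j = t (j+1) * B + W j" by (simp add: algebra_simps)
    then show ?thesis using 1 Y[OF j] r2 by (simp add: g sref_def distrib_left distrib_right)
  next
    case 2
    have "B * t (j+1) - t j * B = - W j" using X1[OF j] by (simp add: B_def)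
    then have "B * t (j+1) = t j * B - W j" by (simp add: algebra_simps)
    then show ?thesis using 2 Y[OF j] r1 by (simp add: g sref_def distrib_left distrib_right)
  next
    case 3
    have "T j * t i = t i * T j" using R3 j i 3 by blast
    moreover have "B * t i = t i * B" using B_t[OF i, of j] t_B[OF i, of j] by (simp add: B_def)
    ultimately show ?thesis using 3 by (simp add: g sref_def distrib_left distrib_right)
  qed
qed

lemma gen_pow:
  assumes j: "j \<in> {1..<n}" and i: "i \<in> {1..n}"
  shows "gen \<phi> n r q u t T j * t i ^ m = t (sref j i) ^ m * gen \<phi> n r q u t T j"
proof (induction m)
  case (Suc m)
  have "gen \<phi> n r q u t T j * t i ^ Suc m = (gen \<phi> n r q u t T j * t i) * t i ^ m"
    by (simp add: mult.assoc power_Suc)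
  also have "\<dots> = t (sref j i) * (gen \<phi> n r q u t T j * t i ^ m)"
    by (simp add: gen_t[OF j i] mult.assoc)
  also have "\<dots> = t (sref j i) ^ Suc m * gen \<phi> n r q u t T j"
    by (simp add: Suc mult.assoc power_Suc)
  finally show ?case .
qed simp

lemma gen_prod:
  assumes j: "j \<in> {1..<n}"
  shows "set xs \<subseteq> {1..n} \<Longrightarrow> gen \<phi> n r q u t T j * prod_list (map (\<lambda>i. t i ^ m i) xs)
     = prod_list (map (\<lambda>i. t (sref j i) ^ m i) xs) * gen \<phi> n r q u t T j"
proof (induction xs)
  case (Cons a xs)
  have a: "a \<in> {1..n}" using Cons.prems by auto
  have "gen \<phi> n r q u t T j * prod_list (map (\<lambda>i. t i ^ m i) (a # xs))
      = (gen \<phi> n r q u t T j * t a ^ m a) * prod_list (map (\<lambda>i. t i ^ m i) xs)"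
    by (simp add: mult.assoc)
  also have "\<dots> = t (sref j a) ^ m a * (gen \<phi> n r q u t T j * prod_list (map (\<lambda>i. t i ^ m i) xs))"
    by (simp add: gen_pow[OF j a] mult.assoc)
  also have "\<dots> = prod_list (map (\<lambda>i. t (sref j i) ^ m i) (a # xs)) * gen \<phi> n r q u t T j"
    using Cons by (simp add: mult.assoc)
  finally show ?case .
qed simp

lemma gen_mpeval:
  assumes j: "j \<in> {1..<n}"
  shows "gen \<phi> n r q u t T j * mpeval \<phi> n t id f = mpeval \<phi> n t (sref j) f * gen \<phi> n r q u t T j"
  unfolding mpeval_def sum_distrib_left sum_distrib_right
proof (intro sum.cong refl)
  fix mo
  let ?g = "gen \<phi> n r q u t T j"
  let ?c = "\<phi> (Poly_Mapping.lookup f mo)"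
  have st: "set [1..<n+1] \<subseteq> {1..n}" by auto
  have "?g * (?c * prod_list (map (\<lambda>i. t (id i) ^ Poly_Mapping.lookup mo i) [1..<n+1]))
      = (?g * ?c) * prod_list (map (\<lambda>i. t i ^ Poly_Mapping.lookup mo i) [1..<n+1])"
    by (simp add: mult.assoc)
  also have "?g * ?c = ?c * ?g" by (rule central[symmetric])
  also have "?c * ?g * prod_list (map (\<lambda>i. t i ^ Poly_Mapping.lookup mo i) [1..<n+1])
      = ?c * (prod_list (map (\<lambda>i. t (sref j i) ^ Poly_Mapping.lookup mo i) [1..<n+1]) * ?g)"
    by (simp only: mult.assoc gen_prod[OF j st])
  finally show "?g * (?c * prod_list (map (\<lambda>i. t (id i) ^ Poly_Mapping.lookup mo i) [1..<n+1]))
      = ?c * prod_list (map (\<lambda>i. t (sref j i) ^ Poly_Mapping.lookup mo i) [1..<n+1]) * ?g"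
    by (simp add: mult.assoc)
qed

end

theorem proposition3p3:
  fixes \<phi> :: "'r::idom \<Rightarrow> 'a::ring_1" and n r :: nat and q :: 'r and u :: "nat \<Rightarrow> 'r"
    and t T :: "nat \<Rightarrow> 'a"
  assumes "n \<ge> 2" and "r \<ge> 1" and "q dvd 1" and "Delta r u dvd 1"
    and "is_alg_map \<phi>" and "shoji_rel \<phi> n r q u t T"
  shows "(\<forall>j\<in>{1..<n}. \<forall>i\<in>{1..n}.
            gen \<phi> n r q u t T j * t i = t (sref j i) * gen \<phi> n r q u t T j)
       \<and> (\<forall>j\<in>{1..<n}. \<forall>f :: (nat \<Rightarrow>\<^sub>0 nat) \<Rightarrow>\<^sub>0 'r. (\<forall>m\<in>Poly_Mapping.keys f. Poly_Mapping.keys m \<subseteq> {1..n}) \<longrightarrow>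
            gen \<phi> n r q u t T j * mpeval \<phi> n t id f = mpeval \<phi> n t (sref j) f * gen \<phi> n r q u t T j)"
proof -
  interpret sh \<phi> n r q u t T by unfold_locales (use assms in auto)
  show ?thesis using gen_t gen_mpeval by blast
qed


end
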